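(* Let $\boldsymbol{\xi}_1,\dots,\boldsymbol{\xi}_T$ be i.i.d. standard Gaussian random vectors in $\mathbb{R}^n$. With probability at least $1-\exp\!\left(T\log(2n)-\frac{n}{32}\right)$, the following holds: for every $\mathbf{r}\in\mathbb{R}^T$ there exists a subset $\mathcal{L}\subseteq[n]$ with $|\mathcal{L}|\ge\frac{n}{20}$ and \[ \min_{l\in\mathcal{L}}\Big(\sum_{j=1}^T r_j\boldsymbol{\xi}_j\Big)_l\ \ge\ \frac12\|\mathbf{r}\|_2. \]
   Context: $(\mathbf{x})_l$ denotes the $l$-th entry of a vector; $[n]=\{1,\dots,n\}$; $\log$ is the natural logarithm. *)

theory Defs
  imports "HOL-Probability.Probability"
begin

definition std_gauss :: "real measure" where
  "std_gauss = density lborel std_normal_density"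

text \<open>Joint law of T i.i.d. standard Gaussian vectors in R^n:
  the sample point is xi with xi (j,l) = l-th entry of the j-th vector
  (j < T, l < n), all entries i.i.d. standard normal.\<close>
definition gauss_family :: "nat \<Rightarrow> nat \<Rightarrow> ((nat \<times> nat) \<Rightarrow> real) measure" where
  "gauss_family T n = PiM ({..<T} \<times> {..<n}) (\<lambda>_. std_gauss)"

definition good_event :: "nat \<Rightarrow> nat \<Rightarrow> ((nat \<times> nat) \<Rightarrow> real) set" where
  "good_event T n = {xi \<in> space (gauss_family T n).
     \<forall>r :: nat \<Rightarrow> real. \<exists>L \<subseteq> {..<n}. real (card L) \<ge> real n / 20 \<and>
       (\<forall>l\<in>L. (\<Sum>j<T. r j * xi (j, l)) \<ge> sqrt (\<Sum>j<T. (r j)\<^sup>2) / 2)}"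

end

theory Submission
  imports Defs "HOL-Analysis.Complex_Transcendental"
begin


lemma std_normal_density_eq: "std_normal_density = normal_density 0 1"
  by simp

lemma prob_space_std_gauss: "prob_space std_gauss"
  unfolding std_gauss_def using prob_space_normal_density[of 1 0] by simp

lemma sets_std_gauss[simp, measurable_cong]: "sets std_gauss = sets borel"
  by (simp add: std_gauss_def)

lemma space_std_gauss[simp]: "space std_gauss = UNIV"
  by (simp add: std_gauss_def)

lemma std_density_le: "std_normal_density x \<le> 1 / sqrt (2 * pi)"
  by (simp add: std_normal_density_def divide_le_eq)

lemma std_gauss_half: "measure std_gauss {0..} \<ge> 1/2"
proof -
  interpret prob_space std_gauss by (rule prob_space_std_gauss)
  have e1: "emeasure std_gauss {..0} = emeasure std_gauss {0..}"
  proof -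
    have "emeasure std_gauss {..0} = (\<integral>\<^sup>+x. ennreal (std_normal_density x) * indicator {..0} x \<partial>lborel)"
      unfolding std_gauss_def by (subst emeasure_density) auto
    also have "\<dots> = (\<integral>\<^sup>+x. ennreal (std_normal_density x) * indicator {..0} x \<partial>(distr lborel borel uminus))"
      by (simp add: lborel_distr_uminus)
    also have "\<dots> = (\<integral>\<^sup>+x. ennreal (std_normal_density (-x)) * indicator {..0} (-x) \<partial>lborel)"
      by (subst nn_integral_distr) auto
    also have "\<dots> = (\<integral>\<^sup>+x. ennreal (std_normal_density x) * indicator {0..} x \<partial>lborel)"
      by (intro nn_integral_cong) (auto simp: std_normal_density_def indicator_def)
    also have "\<dots> = emeasure std_gauss {0..}"
      unfolding std_gauss_def by (subst emeasure_density) auto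
    finally show ?thesis .
  qed
  hence m1: "measure std_gauss {..0} = measure std_gauss {0..}"
    by (simp add: measure_def)
  have u: "{..0} \<union> {0<..} = (UNIV::real set)" by auto
  have "1 = measure std_gauss ({..0} \<union> {0<..})"
    using prob_space by (simp add: u)
  also have "\<dots> \<le> measure std_gauss {..0} + measure std_gauss {0<..}"
    by (rule measure_Un_le) auto
  also have "measure std_gauss {0<..} \<le> measure std_gauss {0..}"
    by (rule finite_measure_mono) auto
  finally show ?thesis using m1 by simp
qed

lemma std_gauss_small: assumes "a \<ge> 0" shows "measure std_gauss {0..<a} \<le> a / sqrt (2*pi)"
proof -
  have "emeasure std_gauss {0..<a} = (\<integral>\<^sup>+x. ennreal (std_normal_density x) * indicator {0..<a} x \<partial>lborel)"
    unfolding std_gauss_def by (subst emeasure_density) auto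
  also have "\<dots> \<le> (\<integral>\<^sup>+x. ennreal (1 / sqrt (2*pi)) * indicator {0..<a} x \<partial>lborel)"
    by (intro nn_integral_mono) (auto simp: indicator_def std_density_le)
  also have "\<dots> = ennreal (1 / sqrt (2*pi)) * emeasure lborel {0..<a}"
    by (subst nn_integral_cmult_indicator) auto
  also have "\<dots> = ennreal (a / sqrt (2*pi))"
    using assms by (simp add: ennreal_mult[symmetric])
  finally have "emeasure std_gauss {0..<a} \<le> ennreal (a / sqrt (2*pi))" .
  moreover have "emeasure std_gauss {0..<a} = ennreal (measure std_gauss {0..<a})"
  proof -
    interpret prob_space std_gauss by (rule prob_space_std_gauss)
    show ?thesis by (simp add: emeasure_eq_measure)
  qed
  ultimately show ?thesis using assms by (simp add: ennreal_le_iff)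
qed

lemma std_gauss_tail: assumes "a \<ge> 0" shows "measure std_gauss {a..} \<ge> 1/2 - a / sqrt (2*pi)"
proof -
  interpret prob_space std_gauss by (rule prob_space_std_gauss)
  have "measure std_gauss {0..} \<le> measure std_gauss ({0..<a} \<union> {a..})"
    by (rule finite_measure_mono) auto
  also have "\<dots> \<le> measure std_gauss {0..<a} + measure std_gauss {a..}"
    by (rule measure_Un_le) auto
  finally show ?thesis using std_gauss_half std_gauss_small[OF assms] by linarith
qed



lemma prob_space_gf: "prob_space (gauss_family T n)"
  unfolding gauss_family_def by (rule prob_space_PiM) (rule prob_space_std_gauss)

lemma space_gf: "space (gauss_family T n) = ({..<T} \<times> {..<n}) \<rightarrow>\<^sub>E UNIV"
  unfolding gauss_family_def by (simp add: space_PiM)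

lemma sets_gf_borel: "sets (gauss_family T n) = sets (PiM ({..<T} \<times> {..<n}) (\<lambda>_. borel))"
  unfolding gauss_family_def by (rule sets_PiM_cong) auto

lemma coord_meas[measurable]: "i \<in> {..<T} \<times> {..<n} \<Longrightarrow> (\<lambda>\<omega>. \<omega> i) \<in> borel_measurable (gauss_family T n)"
proof -
  assume i: "i \<in> {..<T} \<times> {..<n}"
  have "(\<lambda>\<omega>. \<omega> i) \<in> gauss_family T n \<rightarrow>\<^sub>M std_gauss"
    unfolding gauss_family_def by (rule measurable_component_singleton[OF i])
  moreover have "gauss_family T n \<rightarrow>\<^sub>M std_gauss = gauss_family T n \<rightarrow>\<^sub>M borel"
    by (rule measurable_cong_sets) auto
  ultimately show ?thesis by simp
qed

lemma coord_distr_gauss: "i \<in> {..<T} \<times> {..<n} \<Longrightarrow> distr (gauss_family T n) std_gauss (\<lambda>\<omega>. \<omega> i) = std_gauss"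
  unfolding gauss_family_def by (rule distr_PiM_component) (auto intro: prob_space_std_gauss)

lemma coord_distributed:
  assumes "i \<in> {..<T} \<times> {..<n}"
  shows "distributed (gauss_family T n) lborel (\<lambda>\<omega>. \<omega> i) (\<lambda>x. ennreal (std_normal_density x))"
proof -
  have "distr (gauss_family T n) lborel (\<lambda>\<omega>. \<omega> i) = distr (gauss_family T n) std_gauss (\<lambda>\<omega>. \<omega> i)"
    by (rule distr_cong) auto
  also have "\<dots> = density lborel (\<lambda>x. ennreal (std_normal_density x))"
    using coord_distr_gauss[OF assms] by (simp add: std_gauss_def)
  finally show ?thesis unfolding distributed_def using coord_meas[OF assms] by auto
qed

lemma coord_indep:
  assumes "T > 0" "n > 0"
  shows "prob_space.indep_vars (gauss_family T n) (\<lambda>_. borel) (\<lambda>i \<omega>. \<omega> i) ({..<T} \<times> {..<n})"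
proof -
  interpret prob_space "gauss_family T n" by (rule prob_space_gf)
  let ?I = "{..<T} \<times> {..<n}"
  have ne: "?I \<noteq> {}" using assms by auto
  have "distr (gauss_family T n) (\<Pi>\<^sub>M i\<in>?I. borel) (\<lambda>x. \<lambda>i\<in>?I. x i)
      = distr (gauss_family T n) (gauss_family T n) (\<lambda>x. x)"
    by (rule distr_cong) (auto simp: sets_gf_borel space_gf)
  also have "\<dots> = gauss_family T n" by (rule distr_id)
  also have "\<dots> = (\<Pi>\<^sub>M i\<in>?I. distr (gauss_family T n) borel (\<lambda>\<omega>. \<omega> i))"
    unfolding gauss_family_def
  proof (rule PiM_cong)
    fix i assume i: "i \<in> ?I"
    have "distr (gauss_family T n) borel (\<lambda>\<omega>. \<omega> i) = distr (gauss_family T n) std_gauss (\<lambda>\<omega>. \<omega> i)"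
      by (rule distr_cong) auto
    then show "std_gauss = distr (Pi\<^sub>M ?I (\<lambda>_. std_gauss)) borel (\<lambda>\<omega>. \<omega> i)"
      using coord_distr_gauss[OF i] by (simp add: gauss_family_def)
  qed simp
  finally show ?thesis
    by (subst indep_vars_iff_distr_eq_PiM'[OF ne]) (auto intro: coord_meas)
qed

lemma coord_sq:
  assumes "i \<in> {..<T} \<times> {..<n}"
  shows "integrable (gauss_family T n) (\<lambda>\<omega>. (\<omega> i)\<^sup>2)"
    and "(\<integral>\<omega>. (\<omega> i)\<^sup>2 \<partial>gauss_family T n) = 1"
proof -
  note D = coord_distributed[OF assms]
  have "integrable (density lborel (\<lambda>x. ennreal (std_normal_density x))) (\<lambda>x. x\<^sup>2)"
    using integrable_std_normal_moment[of 2]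
    by (subst integrable_density) auto
  then have "integrable (distr (gauss_family T n) lborel (\<lambda>\<omega>. \<omega> i)) (\<lambda>x. x\<^sup>2)"
    using D by (simp add: distributed_def)
  then show "integrable (gauss_family T n) (\<lambda>\<omega>. (\<omega> i)\<^sup>2)"
    using D by (subst (asm) integrable_distr_eq) (auto simp: distributed_def)
  have "(\<integral>x. std_normal_density x * x\<^sup>2 \<partial>lborel) = (\<integral>\<omega>. (\<omega> i)\<^sup>2 \<partial>gauss_family T n)"
    by (rule distributed_integral[OF D]) auto
  moreover have "(\<integral>x. std_normal_density x * x\<^sup>2 \<partial>lborel) = 1"
    using integral_std_normal_moment_even[of 1] by simp
  ultimately show "(\<integral>\<omega>. (\<omega> i)\<^sup>2 \<partial>gauss_family T n) = 1" by simp
qed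



lemma lin_tail:
  fixes u :: "nat \<Rightarrow> real"
  assumes l: "l < n" and u: "49/50 \<le> (\<Sum>j<T. (u j)\<^sup>2)"
  shows "prob_space.prob (gauss_family T n) {\<omega> \<in> space (gauss_family T n). (\<Sum>j<T. u j * \<omega> (j,l)) \<ge> 11/20} \<ge> 1/4"
proof -
  let ?M = "gauss_family T n"
  interpret prob_space ?M by (rule prob_space_gf)
  define S where "S = {j. j < T \<and> u j \<noteq> 0}"
  have fS: "finite S" unfolding S_def by auto
  have Tpos: "T > 0" using u by (cases T) auto
  have npos: "n > 0" using l by auto
  have sumS: "(\<Sum>j<T. f j) = (\<Sum>j\<in>S. f j)" if "\<And>j. u j = 0 \<Longrightarrow> f j = 0" for f :: "nat \<Rightarrow> real"
    by (rule sum.mono_neutral_right) (auto simp: S_def that)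
  have SsumU: "(\<Sum>j<T. (u j)\<^sup>2) = (\<Sum>j\<in>S. (u j)\<^sup>2)" by (rule sumS) simp
  have Sne: "S \<noteq> {}" using u SsumU by auto
  define I' where "I' = (\<lambda>j. (j,l)) ` S"
  have fI': "finite I'" "I' \<noteq> {}" using fS Sne by (auto simp: I'_def)
  have I'sub: "I' \<subseteq> {..<T} \<times> {..<n}" using l by (auto simp: I'_def S_def)
  have inj: "inj_on (\<lambda>j. (j,l)) S" by (auto simp: inj_on_def)
  have ind0: "indep_vars (\<lambda>_. borel) (\<lambda>i \<omega>. \<omega> i) I'"
    by (rule indep_vars_subset[OF coord_indep[OF Tpos npos] I'sub])
  have ind: "indep_vars (\<lambda>_. borel) (\<lambda>i \<omega>. u (fst i) * \<omega> i) I'"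
    using indep_vars_compose2[OF ind0, of "\<lambda>i x. u (fst i) * x" "\<lambda>_. borel"] by simp
  have dist: "distributed ?M lborel (\<lambda>\<omega>. u (fst i) * \<omega> i) (\<lambda>x. ennreal (normal_density 0 \<bar>u (fst i)\<bar> x))"
    if i: "i \<in> I'" for i
  proof -
    have ui: "u (fst i) \<noteq> 0" using i by (auto simp: I'_def S_def)
    have "distributed ?M lborel (\<lambda>\<omega>. \<omega> i) (\<lambda>x. ennreal (normal_density 0 1 x))"
      using coord_distributed[of i T n] i I'sub by auto
    from normal_density_affine[OF this _ ui, of 0] show ?thesis by simp
  qed
  define \<sigma> where "\<sigma> = sqrt (\<Sum>j<T. (u j)\<^sup>2)"
  have sig: "sqrt (\<Sum>i\<in>I'. \<bar>u (fst i)\<bar>\<^sup>2) = \<sigma>"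
    unfolding \<sigma>_def SsumU I'_def by (subst sum.reindex[OF inj]) simp
  have linsum: "(\<Sum>j<T. u j * \<omega> (j,l)) = (\<Sum>i\<in>I'. u (fst i) * \<omega> i)" for \<omega>
    unfolding I'_def by (subst sum.reindex[OF inj]) (auto intro: sumS)
  have D: "distributed ?M lborel (\<lambda>\<omega>. \<Sum>j<T. u j * \<omega> (j,l)) (\<lambda>x. ennreal (normal_density 0 \<sigma> x))"
  proof -
    have pos: "\<And>i. i \<in> I' \<Longrightarrow> 0 < \<bar>u (fst i)\<bar>" by (auto simp: I'_def S_def)
    have "distributed ?M lborel (\<lambda>\<omega>. \<Sum>i\<in>I'. u (fst i) * \<omega> i)
       (\<lambda>x. ennreal (normal_density (\<Sum>i\<in>I'. 0) (sqrt (\<Sum>i\<in>I'. \<bar>u (fst i)\<bar>\<^sup>2)) x))"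
      by (rule sum_indep_normal[OF fI' ind pos dist])
    then show ?thesis unfolding linsum sig by simp
  qed
  have sigpos: "\<sigma> > 0" unfolding \<sigma>_def using u by simp
  have D2: "distributed ?M lborel (\<lambda>\<omega>. (\<Sum>j<T. u j * \<omega> (j,l)) / \<sigma>) (\<lambda>x. ennreal (std_normal_density x))"
    using normal_standard_normal_convert[OF sigpos, of "\<lambda>\<omega>. \<Sum>j<T. u j * \<omega> (j,l)" 0] D by simp
  define a where "a = (11/20) / \<sigma>"
  have set_eq: "{\<omega> \<in> space ?M. (\<Sum>j<T. u j * \<omega> (j,l)) \<ge> 11/20} =
      (\<lambda>\<omega>. (\<Sum>j<T. u j * \<omega> (j,l)) / \<sigma>) -` {a..} \<inter> space ?M"
    using sigpos by (auto simp: a_def divide_le_eq le_divide_eq)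
  have "emeasure ?M ((\<lambda>\<omega>. (\<Sum>j<T. u j * \<omega> (j,l)) / \<sigma>) -` {a..} \<inter> space ?M)
       = (\<integral>\<^sup>+x. ennreal (std_normal_density x) * indicator {a..} x \<partial>lborel)"
    by (rule distributed_emeasure[OF D2]) auto
  also have "\<dots> = emeasure std_gauss {a..}"
    unfolding std_gauss_def by (subst emeasure_density) auto
  finally have "prob {\<omega> \<in> space ?M. (\<Sum>j<T. u j * \<omega> (j,l)) \<ge> 11/20} = measure std_gauss {a..}"
    unfolding set_eq measure_def by simp
  moreover have "measure std_gauss {a..} \<ge> 1/2 - a / sqrt (2*pi)"
    by (rule std_gauss_tail) (use sigpos in \<open>simp add: a_def\<close>)
  moreover have "a / sqrt (2*pi) \<le> 1/4"
  proof -
    have s2: "\<sigma>\<^sup>2 \<ge> 49/50" unfolding \<sigma>_def using u by simp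
    have "a\<^sup>2 = (121/400) / \<sigma>\<^sup>2" by (simp add: a_def power_divide)
    also have "\<dots> \<le> (121/400) / (49/50)" using s2 by (intro divide_left_mono) auto
    also have "\<dots> \<le> 6/16" by simp
    finally have a2: "a\<^sup>2 \<le> 6/16" .
    have "a \<ge> 0" using sigpos by (simp add: a_def)
    have "(sqrt (2*pi) / 4)\<^sup>2 = 2*pi/16" by (simp add: power_divide)
    hence "a\<^sup>2 \<le> (sqrt (2*pi) / 4)\<^sup>2" using a2 pi_gt3 by simp
    hence "a \<le> sqrt (2*pi) / 4" by (rule power2_le_imp_le) simp
    then show ?thesis by (simp add: divide_le_eq mult.commute)
  qed
  ultimately show ?thesis by linarith
qed

lemma quad_markov:
  assumes l: "l < n" and K: "K > 0"
  shows "prob_space.prob (gauss_family T n) {\<omega> \<in> space (gauss_family T n). (\<Sum>j<T. (\<omega> (j,l))\<^sup>2) \<ge> K} \<le> real T / K"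
proof -
  let ?M = "gauss_family T n"
  interpret prob_space ?M by (rule prob_space_gf)
  have mem: "j < T \<Longrightarrow> (j,l) \<in> {..<T} \<times> {..<n}" for j using l by auto
  have int: "integrable ?M (\<lambda>\<omega>. \<Sum>j<T. (\<omega> (j,l))\<^sup>2)"
    using coord_sq(1)[OF mem] by auto
  have "(\<integral>\<omega>. (\<Sum>j<T. (\<omega> (j,l))\<^sup>2) \<partial>?M) = (\<Sum>j<T. (\<integral>\<omega>. (\<omega> (j,l))\<^sup>2 \<partial>?M))"
    by (rule Bochner_Integration.integral_sum) (use coord_sq(1)[OF mem] in auto)
  also have "\<dots> = real T" using coord_sq(2)[OF mem] by simp
  finally have E: "(\<integral>\<omega>. (\<Sum>j<T. (\<omega> (j,l))\<^sup>2) \<partial>?M) = real T" .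
  show ?thesis
    using integral_Markov_inequality_measure[OF int _ _ K, of "space ?M"] E
    by (simp add: sum_nonneg)
qed



definition Xf :: "nat \<Rightarrow> (nat \<Rightarrow> real) \<Rightarrow> real \<Rightarrow> nat \<Rightarrow> ((nat \<times> nat) \<Rightarrow> real) \<Rightarrow> real" where
  "Xf T u K l \<omega> = (if (\<Sum>j<T. u j * \<omega> (j,l)) \<ge> 11/20 \<and> (\<Sum>j<T. (\<omega> (j,l))\<^sup>2) \<le> K then 1 else 0)"

lemma Xf_meas_row:
  "(\<lambda>y. Xf T u K l y) \<in> borel_measurable (PiM ({..<T} \<times> {l}) (\<lambda>_. borel))"
proof -
  have c: "j < T \<Longrightarrow> (\<lambda>y. y (j,l)) \<in> borel_measurable (PiM ({..<T} \<times> {l}) (\<lambda>_. borel))" for j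
    by (rule measurable_component_singleton) auto
  have s1: "(\<lambda>y. \<Sum>j<T. u j * y (j,l)) \<in> borel_measurable (PiM ({..<T} \<times> {l}) (\<lambda>_. borel))"
    by (intro borel_measurable_sum borel_measurable_times measurable_const c) auto
  have s2: "(\<lambda>y. \<Sum>j<T. (y (j,l) :: real)\<^sup>2) \<in> borel_measurable (PiM ({..<T} \<times> {l}) (\<lambda>_. borel))"
    by (intro borel_measurable_sum) (auto intro!: borel_measurable_power c)
  show ?thesis unfolding Xf_def using s1 s2 by measurable
qed

lemma Xf_meas[measurable]:
  assumes "l < n"
  shows "Xf T u K l \<in> borel_measurable (gauss_family T n)"
proof -
  have c: "j < T \<Longrightarrow> (\<lambda>y. y (j,l)) \<in> borel_measurable (gauss_family T n)" for j
    by (rule coord_meas) (use assms in auto)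
  have s1: "(\<lambda>y. \<Sum>j<T. u j * y (j,l)) \<in> borel_measurable (gauss_family T n)"
    by (intro borel_measurable_sum borel_measurable_times measurable_const c) auto
  have s2: "(\<lambda>y. \<Sum>j<T. (y (j,l))\<^sup>2) \<in> borel_measurable (gauss_family T n)"
    by (intro borel_measurable_sum borel_measurable_power c) auto
  show ?thesis unfolding Xf_def[abs_def] using s1 s2 by measurable
qed

lemma Xf_indep:
  assumes "T > 0" "n > 0"
  shows "prob_space.indep_vars (gauss_family T n) (\<lambda>_. borel) (Xf T u K) {..<n}"
proof -
  interpret prob_space "gauss_family T n" by (rule prob_space_gf)
  have R: "indep_vars (\<lambda>l. PiM ({..<T} \<times> {l}) (\<lambda>_. borel)) (\<lambda>l \<omega>. restrict (\<lambda>i. \<omega> i) ({..<T} \<times> {l})) {..<n}"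
    by (rule indep_vars_restrict[OF coord_indep[OF assms]]) (auto simp: disjoint_family_on_def)
  have "indep_vars (\<lambda>_. borel) (\<lambda>l \<omega>. Xf T u K l (restrict (\<lambda>i. \<omega> i) ({..<T} \<times> {l}))) {..<n}"
    by (rule indep_vars_compose2[OF R Xf_meas_row])
  moreover have "(\<lambda>\<omega>. Xf T u K l (restrict (\<lambda>i. \<omega> i) ({..<T} \<times> {l}))) = Xf T u K l" for l
    by (rule ext) (simp add: Xf_def)
  ultimately show ?thesis by simp
qed

lemma bad_prob:
  fixes u :: "nat \<Rightarrow> real"
  assumes n: "n > 0" and u: "49/50 \<le> (\<Sum>j<T. (u j)\<^sup>2)" and K: "K > 0" "real T / K \<le> 1/50"
  shows "prob_space.prob (gauss_family T n) {\<omega> \<in> space (gauss_family T n). (\<Sum>l<n. Xf T u K l \<omega>) < real n / 20}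
           \<le> exp (- real n / 32)"
proof -
  let ?M = "gauss_family T n"
  interpret prob_space ?M by (rule prob_space_gf)
  have Tpos: "T > 0" using u by (cases T) auto
  interpret H: Hoeffding_ineq ?M "{..<n}" "Xf T u K" "\<lambda>_. 0" "\<lambda>_. 1" "\<Sum>l<n. expectation (Xf T u K l)"
    by unfold_locales (auto simp: Xf_indep[OF Tpos n] Xf_def)
  have Ebound: "expectation (Xf T u K l) \<ge> 1/4 - 1/50" if l: "l < n" for l
  proof -
    define A where "A = {\<omega> \<in> space ?M. (\<Sum>j<T. u j * \<omega> (j,l)) \<ge> 11/20 \<and> (\<Sum>j<T. (\<omega> (j,l))\<^sup>2) \<le> K}"
    define B where "B = {\<omega> \<in> space ?M. (\<Sum>j<T. u j * \<omega> (j,l)) \<ge> 11/20}"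
    define C where "C = {\<omega> \<in> space ?M. (\<Sum>j<T. (\<omega> (j,l))\<^sup>2) \<ge> K}"
    have mem: "j < T \<Longrightarrow> (j,l) \<in> {..<T} \<times> {..<n}" for j using l by auto
    have [measurable]: "(\<lambda>y. \<Sum>j<T. u j * y (j,l)) \<in> borel_measurable ?M"
      by (intro borel_measurable_sum borel_measurable_times measurable_const coord_meas mem) auto
    have [measurable]: "(\<lambda>y. \<Sum>j<T. (y (j,l))\<^sup>2) \<in> borel_measurable ?M"
      by (intro borel_measurable_sum borel_measurable_power coord_meas mem) auto
    have sets: "A \<in> sets ?M" "B \<in> sets ?M" "C \<in> sets ?M" unfolding A_def B_def C_def by measurable
    have "expectation (Xf T u K l) = expectation (indicator A)"
      by (rule Bochner_Integration.integral_cong) (auto simp: Xf_def A_def indicator_def)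
    also have "\<dots> = prob A" using sets by (simp add: Int_absorb2 sets.sets_into_space)
    finally have EA: "expectation (Xf T u K l) = prob A" .
    have "B \<subseteq> A \<union> C" unfolding A_def B_def C_def by auto
    hence "prob B \<le> prob (A \<union> C)" using sets by (intro finite_measure_mono) auto
    also have "\<dots> \<le> prob A + prob C" using sets by (intro measure_Un_le) auto
    finally have "prob B \<le> prob A + prob C" .
    moreover have "prob B \<ge> 1/4" unfolding B_def by (rule lin_tail[OF l u])
    moreover have "prob C \<le> 1/50" unfolding C_def using quad_markov[OF l K(1), of T] K(2) by linarith
    ultimately show ?thesis using EA by linarith
  qed
  have mu: "(\<Sum>l<n. expectation (Xf T u K l)) \<ge> real n * (1/4 - 1/50)"
    using sum_mono[of "{..<n}" "\<lambda>_. 1/4 - 1/50" "\<lambda>l. expectation (Xf T u K l)"] Ebound by simp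
  have "prob {\<omega> \<in> space ?M. (\<Sum>l<n. Xf T u K l \<omega>) < real n / 20}
      \<le> prob {\<omega> \<in> space ?M. (\<Sum>l<n. Xf T u K l \<omega>) \<le> (\<Sum>l<n. expectation (Xf T u K l)) - real n / 8}"
    using mu by (intro finite_measure_mono) auto
  also have "\<dots> \<le> exp (-2 * (real n / 8)\<^sup>2 / (\<Sum>l<n. (1 - 0)\<^sup>2))"
    by (rule H.Hoeffding_ineq_le) (use n in auto)
  also have "-2 * (real n / 8)\<^sup>2 / (\<Sum>l<n. (1 - 0 :: real)\<^sup>2) = - real n / 32"
    using n by (simp add: power2_eq_square)
  finally show ?thesis .
qed



lemma ln2_ge: "ln (2::real) \<ge> 2/3"
proof -
  have "exp (2/3::real) ^ 3 = exp 2" by (simp add: exp_of_nat_mult[symmetric])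
  also have "exp (2::real) = exp 1 ^ 2" by (simp add: exp_of_nat_mult[symmetric])
  also have "\<dots> \<le> (272/100)^2" using e_less_272 by (intro power_mono) auto
  also have "\<dots> \<le> (2::real) ^ 3" by (simp add: power2_eq_square)
  finally have "exp (2/3::real) \<le> 2" by (subst (asm) power_mono_iff) auto
  thus ?thesis by (subst ln_ge_iff) auto
qed

lemma ln_pow2_ge: "ln (2 ^ k :: real) \<ge> 2/3 * k"
proof -
  have "real k * (2/3) \<le> real k * ln 2" by (rule mult_left_mono[OF ln2_ge]) simp
  thus ?thesis by (simp add: ln_realpow mult.commute)
qed

lemma ln_ge_pow2: assumes "(2::real)^k \<le> x" shows "ln x \<ge> 2/3 * k"
proof -
  have xpos: "x > 0" proof -
    have "(0::real) < 2^k" by simp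
    thus ?thesis using assms by linarith
  qed
  have "ln ((2::real)^k) \<le> ln x" using assms xpos by (subst ln_le_cancel_iff) auto
  thus ?thesis using ln_pow2_ge[of k] by linarith
qed

lemma num_facts:
  fixes T n :: nat
  assumes T: "T \<ge> 1" and n: "n \<ge> 1" and h: "real T * ln (2 * real n) < real n / 32"
  shows "real n \<ge> 150" "150 * real T \<le> real n - 1"
proof -
  have lpos: "ln (2 * real n) \<ge> 0" using n by simp
  have "1 * ln (2 * real n) \<le> real T * ln (2 * real n)" using T lpos
    by (intro mult_right_mono) auto
  hence h1: "32 * ln (2 * real n) < real n" using h by linarith
  have "ln (2 * real n) \<ge> 2/3 * 1" using ln_ge_pow2[of 1 "2 * real n"] n by simp
  hence "real n > 21" using h1 by linarith
  hence "n \<ge> 22" by simp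
  hence n22: "real n \<ge> 22" by simp
  have "ln (2 * real n) \<ge> 2/3 * 5" using ln_ge_pow2[of 5 "2 * real n"] n22 by simp
  hence "real n > 106" using h1 by linarith
  hence "n \<ge> 107" by simp
  hence n107: "real n \<ge> 107" by simp
  have "ln (2 * real n) \<ge> 2/3 * 7" using ln_ge_pow2[of 7 "2 * real n"] n107 by simp
  hence "real n > 149" using h1 by linarith
  hence "n \<ge> 150" by simp
  hence n150: "real n \<ge> 150" by simp
  thus "real n \<ge> 150" .
  have "ln (2 * real n) \<ge> 2/3 * 8" using ln_ge_pow2[of 8 "2 * real n"] n150 by simp
  hence "real T * (16/3) \<le> real T * ln (2 * real n)" by (intro mult_left_mono) auto
  hence "real T * (16/3) < real n / 32" using h by linarith
  thus "150 * real T \<le> real n - 1" using n150 by linarith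
qed

lemma trunc_props:
  fixes x N :: real
  assumes N: "N > 0" and x: "\<bar>x\<bar> \<le> 1"
  defines "k \<equiv> (if x \<ge> 0 then \<lfloor>x * N\<rfloor> else \<lceil>x * N\<rceil>)"
  shows "\<bar>real_of_int k\<bar> \<le> N" "\<bar>x - real_of_int k / N\<bar> \<le> 1 / N"
        "(real_of_int k / N)\<^sup>2 \<ge> x\<^sup>2 - 2 * \<bar>x\<bar> / N"
proof -
  have xN: "\<bar>x * N\<bar> \<le> N" using x N by (simp add: abs_mult mult_left_le_one_le)
  have f1: "of_int \<lfloor>x*N\<rfloor> \<le> x*N" "x*N < of_int \<lfloor>x*N\<rfloor> + 1"
    using floor_correct[of "x*N"] by auto
  have f2: "of_int \<lceil>x*N\<rceil> - 1 < x*N" "x*N \<le> of_int \<lceil>x*N\<rceil>"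
    using ceiling_correct[of "x*N"] by auto
  have f3: "x \<ge> 0 \<Longrightarrow> \<lfloor>x*N\<rfloor> \<ge> 0" using N by simp
  have f4: "x < 0 \<Longrightarrow> \<lceil>x*N\<rceil> \<le> 0" using N by (simp add: mult_neg_pos less_imp_le)
  have a: "\<bar>real_of_int k\<bar> \<le> \<bar>x * N\<bar> \<and> \<bar>x * N\<bar> \<le> \<bar>real_of_int k\<bar> + 1 \<and>
    \<bar>x * N - real_of_int k\<bar> \<le> 1"
  proof (cases "x \<ge> 0")
    case True
    hence "k = \<lfloor>x*N\<rfloor>" by (simp add: k_def)
    moreover have "real_of_int \<lfloor>x*N\<rfloor> \<ge> 0" using f3 True by simp
    moreover have "x * N \<ge> 0" using True N by simp
    ultimately show ?thesis by (simp add: abs_of_nonneg) (use f1 in linarith)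
  next
    case False
    hence "k = \<lceil>x*N\<rceil>" by (simp add: k_def)
    moreover have "real_of_int \<lceil>x*N\<rceil> \<le> 0" using f4 False by simp
    moreover have "x * N \<le> 0" using False N by (simp add: mult_nonpos_nonneg)
    ultimately show ?thesis by (simp add: abs_of_nonpos) (use f2 in linarith)
  qed
  hence a: "\<bar>real_of_int k\<bar> \<le> \<bar>x * N\<bar>" "\<bar>x * N\<bar> \<le> \<bar>real_of_int k\<bar> + 1"
    "\<bar>x * N - real_of_int k\<bar> \<le> 1" by auto
  show "\<bar>real_of_int k\<bar> \<le> N" using a xN by linarith
  have "\<bar>x - real_of_int k / N\<bar> = \<bar>x * N - real_of_int k\<bar> / N" using N
    by (simp add: field_simps abs_div_pos[symmetric])
  thus "\<bar>x - real_of_int k / N\<bar> \<le> 1 / N" using a(3) N by (simp add: divide_right_mono)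
  define m where "m = \<bar>real_of_int k\<bar>"
  define y where "y = \<bar>x * N\<bar>"
  have m0: "m \<ge> 0" "m \<ge> y - 1" "y \<ge> 0" using a by (auto simp: m_def y_def)
  have my: "m\<^sup>2 \<ge> y\<^sup>2 - 2 * y"
  proof (cases "y \<ge> 1")
    case True
    hence "(y - 1)\<^sup>2 \<le> m\<^sup>2" using m0 by (intro power_mono) auto
    thus ?thesis by (simp add: power2_eq_square algebra_simps)
  next
    case False
    hence "y * y \<le> 2 * y" using m0 by (intro mult_right_mono) auto
    hence "y\<^sup>2 - 2*y \<le> 0" by (simp add: power2_eq_square)
    thus ?thesis using zero_le_power2[of m] by linarith
  qed
  have "(real_of_int k / N)\<^sup>2 = m\<^sup>2 / N\<^sup>2" by (simp add: m_def power_divide)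
  also have "x\<^sup>2 - 2 * \<bar>x\<bar> / N = (y\<^sup>2 - 2*y) / N\<^sup>2" using N
    by (simp add: y_def field_simps power2_eq_square abs_mult)
  ultimately show "(real_of_int k / N)\<^sup>2 \<ge> x\<^sup>2 - 2 * \<bar>x\<bar> / N"
    using my N by (simp add: divide_right_mono)
qed



lemma sum_if_card: fixes n :: nat shows "(\<Sum>l<n. (if P l then 1 else 0 :: real)) = real (card {l. l < n \<and> P l})"
proof -
  have "(\<Sum>l<n. (if P l then 1 else 0 :: real)) = (\<Sum>l\<in>{l\<in>{..<n}. P l}. 1)"
    by (subst sum.inter_filter) auto
  also have "{l\<in>{..<n}. P l} = {l. l < n \<and> P l}" by auto
  finally show ?thesis by simp
qed

theorem mainTheorem6:
  fixes T n :: nat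
  assumes "n \<ge> 1"
  shows "\<exists>E \<in> sets (gauss_family T n). E \<subseteq> good_event T n \<and>
           measure (gauss_family T n) E \<ge> 1 - exp (real T * ln (2 * real n) - real n / 32)"
proof -
  let ?M = "gauss_family T n"
  interpret prob_space ?M by (rule prob_space_gf)
  show ?thesis
  proof (cases "real T * ln (2 * real n) - real n / 32 \<ge> 0")
    case True
    hence "1 - exp (real T * ln (2 * real n) - real n / 32) \<le> 0" by simp
    thus ?thesis by (intro bexI[of _ "{}"]) auto
  next
    case False
    hence h: "real T * ln (2 * real n) < real n / 32" by simp
    define N where "N = real n - 1"
    define V where "V = (\<lambda>k::int. real_of_int k / N) ` {-(int n - 1)..int n - 1}"
    define ext :: "(nat \<Rightarrow> real) \<Rightarrow> nat \<Rightarrow> real" where "ext f = (\<lambda>j. if j < T then f j else 0)" for f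
    define G where "G = {u \<in> ext ` (PiE {..<T} (\<lambda>_. V)). 49/50 \<le> (\<Sum>j<T. (u j)\<^sup>2)}"
    define K where "K = N\<^sup>2 / (400 * real T)"
    define Bad where "Bad u = {\<omega> \<in> space ?M. (\<Sum>l<n. Xf T u K l \<omega>) < real n / 20}" for u
    define E where "E = space ?M - (\<Union>u\<in>G. Bad u)"
    have nf: "real n \<ge> 150" "150 * real T \<le> N" if "T \<ge> 1"
      using num_facts[OF that assms h] by (auto simp: N_def)
    have finV: "finite V" by (simp add: V_def)
    have cardV: "card V \<le> 2 * n"
    proof -
      have "card V \<le> card {-(int n - 1)..int n - 1}" unfolding V_def by (rule card_image_le) simp
      also have "\<dots> \<le> 2 * n" by simp
      finally show ?thesis .
    qed
    have finP: "finite (ext ` (PiE {..<T} (\<lambda>_. V)))" using finV by (auto intro!: finite_PiE)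
    have finG: "finite G" by (rule finite_subset[OF _ finP]) (auto simp: G_def)
    have cardG: "card G \<le> (2 * n) ^ T"
    proof -
      have "card G \<le> card (ext ` (PiE {..<T} (\<lambda>_. V)))"
        unfolding G_def using finV by (intro card_mono) (auto intro!: finite_PiE)
      also have "\<dots> \<le> card (PiE {..<T} (\<lambda>_. V))" by (rule card_image_le) (auto intro!: finite_PiE finV)
      also have "\<dots> = card V ^ T" by (simp add: card_PiE)
      also have "\<dots> \<le> (2 * n) ^ T" by (rule power_mono[OF cardV]) simp
      finally show ?thesis .
    qed
    have Bad_meas: "Bad u \<in> sets ?M" for u
    proof -
      have "(\<lambda>\<omega>. \<Sum>l<n. Xf T u K l \<omega>) \<in> borel_measurable ?M"
        by (intro borel_measurable_sum) (auto intro: Xf_meas)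
      thus ?thesis unfolding Bad_def by measurable
    qed
    have Bad_prob: "prob (Bad u) \<le> exp (- real n / 32)" if u: "u \<in> G" for u
    proof -
      have ub: "49/50 \<le> (\<Sum>j<T. (u j)\<^sup>2)" using u by (simp add: G_def)
      hence T1: "T \<ge> 1" by (cases T) auto
      note nf' = nf[OF T1]
      have Npos: "N > 0" using nf' by (simp add: N_def)
      have Kpos: "K > 0" using Npos T1 by (simp add: K_def)
      have "real T / K = 400 * (real T)\<^sup>2 / N\<^sup>2" using Npos T1
        by (simp add: K_def field_simps power2_eq_square)
      also have "\<dots> \<le> 400 * (real T)\<^sup>2 / (150 * real T)\<^sup>2"
        using nf' T1 by (intro divide_left_mono power_mono) auto
      also have "\<dots> \<le> 1/50" using T1 by (simp add: power2_eq_square)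
      finally have TK: "real T / K \<le> 1/50" .
      show ?thesis unfolding Bad_def
        by (rule bad_prob) (use assms ub Kpos TK in auto)
    qed
    have E_sets: "E \<in> sets ?M" unfolding E_def using finG Bad_meas by auto
    have "prob (\<Union>u\<in>G. Bad u) \<le> (\<Sum>u\<in>G. prob (Bad u))"
      by (rule measure_UNION_le[OF finG]) (rule Bad_meas)
    also have "\<dots> \<le> real (card G) * exp (- real n / 32)"
      using Bad_prob sum_bounded_above[of G "\<lambda>u. prob (Bad u)" "exp (- real n / 32)"] by simp
    also have "\<dots> \<le> real ((2 * n) ^ T) * exp (- real n / 32)"
      using cardG by (intro mult_right_mono) (simp only: of_nat_le_iff, simp)
    also have "\<dots> = exp (real T * ln (2 * real n) - real n / 32)"
    proof -
      have "exp (real T * ln (2 * real n)) = (2 * real n) ^ T"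
        using assms by (simp add: exp_of_nat_mult)
      moreover have "exp (real T * ln (2*real n) - real n/32) = exp (real T * ln (2*real n)) * exp (- real n/32)"
        by (subst exp_add[symmetric]) simp
      ultimately show ?thesis by simp
    qed
    finally have PU: "prob (\<Union>u\<in>G. Bad u) \<le> exp (real T * ln (2 * real n) - real n / 32)" .
    have "prob E = 1 - prob (\<Union>u\<in>G. Bad u)"
      unfolding E_def by (rule prob_compl) (use finG Bad_meas in auto)
    hence Eprob: "prob E \<ge> 1 - exp (real T * ln (2 * real n) - real n / 32)" using PU by simp
    have Egood: "E \<subseteq> good_event T n"
    proof
      fix \<omega> assume \<omega>E: "\<omega> \<in> E"
      hence \<omega>sp: "\<omega> \<in> space ?M" by (simp add: E_def)
      have "\<exists>L \<subseteq> {..<n}. real (card L) \<ge> real n / 20 \<and>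
         (\<forall>l\<in>L. (\<Sum>j<T. r j * \<omega> (j, l)) \<ge> sqrt (\<Sum>j<T. (r j)\<^sup>2) / 2)" for r
      proof (cases "(\<Sum>j<T. (r j)\<^sup>2) = 0")
        case True
        hence r0: "\<forall>j<T. r j = 0" by (simp add: sum_nonneg_eq_0_iff)
        show ?thesis
          by (rule exI[of _ "{..<n}"]) (simp add: True r0)
      next
        case False
        define s2 where "s2 = (\<Sum>j<T. (r j)\<^sup>2)"
        have s2pos: "s2 > 0" using False by (simp add: s2_def sum_nonneg order_less_le)
        hence T1: "T \<ge> 1" by (cases T) (auto simp: s2_def)
        note nf' = nf[OF T1]
        have Npos: "N > 0" using nf' by (simp add: N_def)
        define s where "s = sqrt s2"
        have spos: "s > 0" using s2pos by (simp add: s_def)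
        define \<rho> where "\<rho> j = r j / s" for j
        have rr: "r j = s * \<rho> j" for j using spos by (simp add: \<rho>_def)
        have rho1: "(\<Sum>j<T. (\<rho> j)\<^sup>2) = 1"
        proof -
          have "(\<Sum>j<T. (\<rho> j)\<^sup>2) = (\<Sum>j<T. (r j)\<^sup>2) / s\<^sup>2"
            by (simp add: \<rho>_def power_divide sum_divide_distrib)
          also have "s\<^sup>2 = s2" using s2pos by (simp add: s_def)
          finally show ?thesis using s2pos by (simp add: s2_def)
        qed
        have rhob: "\<bar>\<rho> j\<bar> \<le> 1" if "j < T" for j
        proof -
          have "(\<rho> j)\<^sup>2 \<le> (\<Sum>j<T. (\<rho> j)\<^sup>2)"
            by (rule member_le_sum) (use that in auto)
          hence "(\<rho> j)\<^sup>2 \<le> 1\<^sup>2" using rho1 by simp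
          hence "(\<rho> j)\<^sup>2 \<le> 1" by simp
          thus ?thesis by (simp add: abs_square_le_1)
        qed
        define k where "k j = (if \<rho> j \<ge> 0 then \<lfloor>\<rho> j * N\<rfloor> else \<lceil>\<rho> j * N\<rceil>)" for j
        define f where "f j = real_of_int (k j) / N" for j
        define u where "u = ext f"
        have tp: "\<bar>real_of_int (k j)\<bar> \<le> N" "\<bar>\<rho> j - f j\<bar> \<le> 1 / N"
                 "(f j)\<^sup>2 \<ge> (\<rho> j)\<^sup>2 - 2 * \<bar>\<rho> j\<bar> / N" if "j < T" for j
          using trunc_props[OF Npos rhob[OF that]] by (simp_all add: k_def f_def)
        have uG: "u \<in> G"
        proof -
          have "restrict f {..<T} \<in> PiE {..<T} (\<lambda>_. V)"
          proof (rule restrict_PiE_iff[THEN iffD2], intro ballI)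
            fix j assume "j \<in> {..<T}"
            hence j: "j < T" by simp
            have "\<bar>k j\<bar> \<le> int n - 1"
            proof -
              have "real_of_int \<bar>k j\<bar> \<le> real_of_int (int n - 1)"
                using tp(1)[OF j] by (simp add: N_def)
              thus ?thesis by linarith
            qed
            hence "k j \<in> {-(int n - 1)..int n - 1}" by auto
            thus "f j \<in> V" unfolding V_def f_def by auto
          qed
          moreover have "ext (restrict f {..<T}) = u" by (auto simp: ext_def u_def)
          moreover have "49/50 \<le> (\<Sum>j<T. (u j)\<^sup>2)"
          proof -
            have "(\<Sum>j<T. (\<rho> j)\<^sup>2 - 2 / N) \<le> (\<Sum>j<T. (u j)\<^sup>2)"
            proof (rule sum_mono)
              fix j assume "j \<in> {..<T}"
              hence j: "j < T" by simp
              have "2 * \<bar>\<rho> j\<bar> / N \<le> 2 / N" using rhob[OF j] Npos by (simp add: divide_right_mono)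
              thus "(\<rho> j)\<^sup>2 - 2 / N \<le> (u j)\<^sup>2" using tp(3)[OF j] j by (simp add: u_def ext_def)
            qed
            moreover have "(\<Sum>j<T. (\<rho> j)\<^sup>2 - 2 / N) = 1 - 2 * real T / N"
              by (simp add: sum_subtractf rho1)
            moreover have "2 * real T / N \<le> 1/50"
              using nf'(2) Npos by (simp add: divide_le_eq)
            ultimately show ?thesis by linarith
          qed
          ultimately show ?thesis unfolding G_def by blast
        qed
        hence notbad: "\<omega> \<notin> Bad u" using \<omega>E by (auto simp: E_def)
        define L where "L = {l. l < n \<and> (\<Sum>j<T. u j * \<omega> (j,l)) \<ge> 11/20 \<and> (\<Sum>j<T. (\<omega> (j,l))\<^sup>2) \<le> K}"
        have "(\<Sum>l<n. Xf T u K l \<omega>) = real (card L)"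
          unfolding Xf_def L_def by (rule sum_if_card)
        hence cardL: "real (card L) \<ge> real n / 20" using notbad \<omega>sp by (simp add: Bad_def)
        have Lgood: "(\<Sum>j<T. r j * \<omega> (j, l)) \<ge> sqrt (\<Sum>j<T. (r j)\<^sup>2) / 2" if l: "l \<in> L" for l
        proof -
          have l1: "(\<Sum>j<T. u j * \<omega> (j,l)) \<ge> 11/20" and l2: "(\<Sum>j<T. (\<omega> (j,l))\<^sup>2) \<le> K"
            using l by (auto simp: L_def)
          have split: "(\<Sum>j<T. \<rho> j * \<omega> (j,l)) = (\<Sum>j<T. u j * \<omega> (j,l)) + (\<Sum>j<T. (\<rho> j - u j) * \<omega> (j,l))"
            by (simp add: sum.distrib[symmetric] algebra_simps)
          have d1: "(\<Sum>j<T. (\<rho> j - u j)\<^sup>2) \<le> real T * (1/N)\<^sup>2"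
          proof -
            have "(\<Sum>j<T. (\<rho> j - u j)\<^sup>2) \<le> (\<Sum>j<T. (1/N)\<^sup>2)"
            proof (rule sum_mono)
              fix j assume "j \<in> {..<T}"
              hence j: "j < T" by simp
              have "\<bar>\<rho> j - u j\<bar> \<le> 1/N" using tp(2)[OF j] j by (simp add: u_def ext_def)
              thus "(\<rho> j - u j)\<^sup>2 \<le> (1/N)\<^sup>2" using Npos by (simp add: power2_le_iff_abs_le)
            qed
            thus ?thesis by simp
          qed
          have "(\<Sum>j<T. (\<rho> j - u j) * \<omega> (j,l))\<^sup>2 \<le> (\<Sum>j<T. (\<rho> j - u j)\<^sup>2) * (\<Sum>j<T. (\<omega> (j,l))\<^sup>2)"
            by (rule Cauchy_Schwarz_ineq_sum)
          also have "\<dots> \<le> (real T * (1/N)\<^sup>2) * K"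
            using d1 l2 by (intro mult_mono) (auto intro: sum_nonneg)
          also have "\<dots> = (1/20)\<^sup>2" using Npos T1 by (simp add: K_def field_simps power2_eq_square)
          finally have "\<bar>\<Sum>j<T. (\<rho> j - u j) * \<omega> (j,l)\<bar> \<le> 1/20" by (simp add: power2_le_iff_abs_le)
          hence rl: "(\<Sum>j<T. \<rho> j * \<omega> (j,l)) \<ge> 1/2" using split l1 by linarith
          have "(\<Sum>j<T. r j * \<omega> (j, l)) = s * (\<Sum>j<T. \<rho> j * \<omega> (j,l))"
            by (simp add: rr sum_distrib_left mult.assoc)
          also have "\<dots> \<ge> s * (1/2)" using rl spos by (intro mult_left_mono) auto
          finally show ?thesis by (simp add: s_def s2_def)
        qed
        show ?thesis
          by (rule exI[of _ L]) (use cardL Lgood in \<open>auto simp: L_def\<close>)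
      qed
      thus "\<omega> \<in> good_event T n" using \<omega>sp by (simp add: good_event_def)
    qed
    show ?thesis using E_sets Egood Eprob by blast
  qed
qed


end
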